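(* $\mathcal{U}_2^m(\mathfrak{N})=\mathbb{N}_{\ge 2}$.
   Context: $\mathbb{N}$ denotes the non-negative integers and $\mathbb{N}_{\ge2}$ the set of integers greater than one. A numerical semigroup is a submonoid of $(\mathbb{N},+)$ with finite complement; $\mathfrak{N}$ denotes the set of all numerical semigroups. A numerical semigroup is irreducible if it cannot be written as the intersection of two numerical semigroups properly containing it. Given a numerical semigroup $S$ and irreducible numerical semigroups $S_1,\dots,S_n$, the expression $S_1\cap\dots\cap S_n$ is a factorization of $S$ (of length $n$) if $S=S_1\cap\dots\cap S_n$ and $S\neq\bigcap_{j\in J}S_j$ for every nonempty proper subset $J\subsetneq\{1,\dots,n\}$. For a positive integer $k$, $\mathcal{U}_k^m(\mathfrak{N})$ is the set of positive integers $l$ such that there exists a numerical semigroup having a factorization of length $k$ and a factorization of length $l$. *)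

theory Defs
  imports Main
begin

definition numerical_semigroup :: "nat set \<Rightarrow> bool" where
  "numerical_semigroup S \<longleftrightarrow>
     0 \<in> S \<and> (\<forall>x\<in>S. \<forall>y\<in>S. x + y \<in> S) \<and> finite (UNIV - S)"

definition irreducible_ns :: "nat set \<Rightarrow> bool" where
  "irreducible_ns S \<longleftrightarrow> numerical_semigroup S \<and>
     \<not> (\<exists>T U. numerical_semigroup T \<and> numerical_semigroup U \<and>
              S \<subset> T \<and> S \<subset> U \<and> S = T \<inter> U)"

definition is_factorization :: "nat set \<Rightarrow> nat \<Rightarrow> (nat \<Rightarrow> nat set) \<Rightarrow> bool" where
  "is_factorization S n Si \<longleftrightarrow> n \<ge> 1 \<and>
     (\<forall>i\<in>{1..n}. irreducible_ns (Si i)) \<and>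
     S = (\<Inter>i\<in>{1..n}. Si i) \<and>
     (\<forall>J. J \<noteq> {} \<and> J \<subset> {1..n} \<longrightarrow> S \<noteq> (\<Inter>j\<in>J. Si j))"

definition has_factorization_of_length :: "nat set \<Rightarrow> nat \<Rightarrow> bool" where
  "has_factorization_of_length S n \<longleftrightarrow> (\<exists>Si. is_factorization S n Si)"

definition U_m :: "nat \<Rightarrow> nat set" where
  "U_m k = {l. l > 0 \<and> (\<exists>S. numerical_semigroup S \<and>
       has_factorization_of_length S k \<and> has_factorization_of_length S l)}"

end

theory Submission
  imports Defs
begin

definition TT :: "nat \<Rightarrow> nat set" where
  "TT F = {0} \<union> {y. F < 2*y \<and> y \<noteq> F}"

definition AA :: "nat \<Rightarrow> nat set" where
  "AA t = {y. even y \<or> 4*t+1 \<le> y}"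

lemma irr_crit:
  assumes ns: "numerical_semigroup S" and F: "F \<notin> S"
    and H: "\<And>x. x \<notin> S \<Longrightarrow> x \<noteq> F \<Longrightarrow> x < F \<and> (F - x \<in> S \<or> 2*x = F)"
  shows "irreducible_ns S"
  unfolding irreducible_ns_def
proof (intro conjI ns notI)
  assume "\<exists>T U. numerical_semigroup T \<and> numerical_semigroup U \<and> S \<subset> T \<and> S \<subset> U \<and> S = T \<inter> U"
  then obtain T U where T: "numerical_semigroup T" and U: "numerical_semigroup U"
    and ST: "S \<subset> T" and SU: "S \<subset> U" and eq: "S = T \<inter> U" by blast
  have key: "F \<in> V" if V: "numerical_semigroup V" and SV: "S \<subset> V" for V
  proof -
    obtain x where x: "x \<in> V" "x \<notin> S" using SV by blast
    show ?thesis
    proof (cases "x = F")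
      case True then show ?thesis using x by simp
    next
      case False
      from H[OF x(2) False] have "x < F" and d: "F - x \<in> S \<or> 2*x = F" by auto
      from V have cl: "\<And>a b. a \<in> V \<Longrightarrow> b \<in> V \<Longrightarrow> a + b \<in> V"
        unfolding numerical_semigroup_def by blast
      from d show ?thesis
      proof
        assume "F - x \<in> S"
        then have "F - x \<in> V" using SV by blast
        from cl[OF x(1) this] show ?thesis using \<open>x < F\<close> by simp
      next
        assume "2*x = F"
        from cl[OF x(1) x(1)] show ?thesis using \<open>2*x = F\<close> by (simp add: mult_2)
      qed
    qed
  qed
  from key[OF T ST] key[OF U SU] eq F show False by blast
qed

lemma ns_TT: "numerical_semigroup (TT F)"
  unfolding numerical_semigroup_def
proof (intro conjI ballI)
  show "0 \<in> TT F" by (simp add: TT_def)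
next
  fix x y assume "x \<in> TT F" "y \<in> TT F"
  then show "x + y \<in> TT F" unfolding TT_def by auto
next
  have "UNIV - TT F \<subseteq> {..F}" unfolding TT_def by auto
  then show "finite (UNIV - TT F)" using finite_subset by blast
qed

lemma irr_TT: "F > 0 \<Longrightarrow> irreducible_ns (TT F)"
  apply (rule irr_crit[where F=F, OF ns_TT])
   apply (simp add: TT_def)
  apply (simp add: TT_def)
  apply auto
  done

lemma ns_Int: "numerical_semigroup A \<Longrightarrow> numerical_semigroup B \<Longrightarrow> numerical_semigroup (A \<inter> B)"
  unfolding numerical_semigroup_def
  by (auto intro: finite_subset[of "UNIV - (A \<inter> B)" "(UNIV - A) \<union> (UNIV - B)"])

lemma ns_AA: "numerical_semigroup (AA t)"
  unfolding numerical_semigroup_def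
proof (intro conjI ballI)
  show "0 \<in> AA t" by (simp add: AA_def)
next
  fix x y assume "x \<in> AA t" "y \<in> AA t"
  then show "x + y \<in> AA t" unfolding AA_def by auto
next
  have "UNIV - AA t \<subseteq> {..4*t}" unfolding AA_def by auto
  then show "finite (UNIV - AA t)" using finite_subset by blast
qed

lemma irr_AA: "t > 0 \<Longrightarrow> irreducible_ns (AA t)"
  apply (rule irr_crit[where F="4*t - 1", OF ns_AA])
   apply (simp add: AA_def)
  apply (simp add: AA_def)
  apply presburger
  done

lemma factI:
  assumes "n \<ge> 1" "\<forall>i\<in>{1..n}. irreducible_ns (Si i)" "S = (\<Inter>i\<in>{1..n}. Si i)"
    and W: "\<forall>i\<in>{1..n}. \<exists>w. w \<notin> Si i \<and> (\<forall>j\<in>{1..n}. j \<noteq> i \<longrightarrow> w \<in> Si j)"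
  shows "is_factorization S n Si"
  unfolding is_factorization_def
proof (intro conjI assms allI impI)
  fix J :: "nat set" assume J: "J \<noteq> {} \<and> J \<subset> {1..n}"
  then obtain i where i: "i \<in> {1..n}" "i \<notin> J" by blast
  from W i obtain w where w: "w \<notin> Si i" "\<forall>j\<in>{1..n}. j \<noteq> i \<longrightarrow> w \<in> Si j" by blast
  have "w \<in> (\<Inter>j\<in>J. Si j)"
  proof
    fix j assume "j \<in> J"
    then have "j \<in> {1..n}" "j \<noteq> i" using J i by auto
    then show "w \<in> Si j" using w(2) by blast
  qed
  moreover have "w \<notin> S" using assms(3) w(1) i by blast
  ultimately show "S \<noteq> (\<Inter>j\<in>J. Si j)" by blast
qed

lemma len2:
  assumes "t > 0"
  shows "is_factorization (AA t \<inter> TT (4*t)) 2 (\<lambda>i. if i = 1 then AA t else TT (4*t))"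
proof (rule factI)
  have e: "{1..2::nat} = {1,2}" by auto
  show "\<forall>i\<in>{1..2::nat}. irreducible_ns (if i = 1 then AA t else TT (4*t))"
    using irr_AA[OF assms] irr_TT[of "4*t"] assms unfolding e by auto
  show "AA t \<inter> TT (4*t) = (\<Inter>i\<in>{1..2::nat}. if i = 1 then AA t else TT (4*t))"
    unfolding e by auto
  have w1: "2*t+1 \<notin> AA t \<and> 2*t+1 \<in> TT (4*t)" using assms by (simp add: AA_def TT_def)
  have w2: "4*t \<notin> TT (4*t) \<and> 4*t \<in> AA t" using assms by (simp add: AA_def TT_def)
  show "\<forall>i\<in>{1..2::nat}. \<exists>w. w \<notin> (if i = 1 then AA t else TT (4*t)) \<and>
        (\<forall>j\<in>{1..2::nat}. j \<noteq> i \<longrightarrow> w \<in> (if j = 1 then AA t else TT (4*t)))"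
    using w1 w2 unfolding e by auto
qed simp

definition CC :: "nat \<Rightarrow> nat \<Rightarrow> nat set" where
  "CC t i = (if i = 1 then TT (4*t) else TT (2*t + 2*i - 3))"

lemma inter_CC:
  assumes "t > 0"
  shows "AA t \<inter> TT (4*t) = (\<Inter>i\<in>{1..t+1}. CC t i)"
proof (intro set_eqI iffI)
  fix y assume y: "y \<in> AA t \<inter> TT (4*t)"
  show "y \<in> (\<Inter>i\<in>{1..t+1}. CC t i)"
  proof (intro INT_I)
    fix i assume i: "i \<in> {1..t+1}"
    show "y \<in> CC t i"
    proof (cases "i = 1")
      case True then show ?thesis using y by (simp add: CC_def)
    next
      case False
      then show ?thesis using y i unfolding CC_def AA_def TT_def by auto
    qed
  qed
next
  fix y assume y: "y \<in> (\<Inter>i\<in>{1..t+1}. CC t i)"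
  then have y1: "y \<in> TT (4*t)" using CC_def by fastforce
  show "y \<in> AA t \<inter> TT (4*t)"
  proof (rule ccontr)
    assume "y \<notin> AA t \<inter> TT (4*t)"
    with y1 have ny: "odd y" "y \<le> 4*t" "y > 2*t" unfolding AA_def TT_def by auto
    obtain k where k: "y = 2*k+1" using ny(1) oddE by blast
    define i where "i = k + 2 - t"
    have i: "i \<in> {1..t+1}" "i \<noteq> 1" "2*t + 2*i - 3 = y" using ny k unfolding i_def by auto
    have "y \<in> CC t i" using y i(1) by blast
    then show False using i by (simp add: CC_def TT_def)
  qed
qed

lemma lenl:
  assumes "t > 0"
  shows "is_factorization (AA t \<inter> TT (4*t)) (t+1) (CC t)"
proof (rule factI)
  show "\<forall>i\<in>{1..t+1}. irreducible_ns (CC t i)"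
    using assms by (auto simp: CC_def intro!: irr_TT)
  show "AA t \<inter> TT (4*t) = (\<Inter>i\<in>{1..t+1}. CC t i)" using inter_CC[OF assms] .
  show "\<forall>i\<in>{1..t+1}. \<exists>w. w \<notin> CC t i \<and> (\<forall>j\<in>{1..t+1}. j \<noteq> i \<longrightarrow> w \<in> CC t j)"
  proof
    fix i assume i: "i \<in> {1..t+1}"
    show "\<exists>w. w \<notin> CC t i \<and> (\<forall>j\<in>{1..t+1}. j \<noteq> i \<longrightarrow> w \<in> CC t j)"
    proof (cases "i = 1")
      case True
      show ?thesis
        apply (rule exI[of _ "4*t"])
        using True assms unfolding CC_def TT_def by auto
    next
      case False
      show ?thesis
        apply (rule exI[of _ "2*t + 2*i - 3"])
        using False i assms unfolding CC_def TT_def by auto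
    qed
  qed
qed simp

lemma fact_parts:
  assumes "is_factorization S n Si"
  shows "\<forall>i\<in>{1..n}. irreducible_ns (Si i)" "S = (\<Inter>i\<in>{1..n}. Si i)"
    "\<And>J. J \<noteq> {} \<Longrightarrow> J \<subset> {1..n} \<Longrightarrow> S \<noteq> (\<Inter>j\<in>J. Si j)"
proof -
  have d: "n \<ge> 1 \<and> (\<forall>i\<in>{1..n}. irreducible_ns (Si i)) \<and> S = (\<Inter>i\<in>{1..n}. Si i) \<and>
     (\<forall>J. J \<noteq> {} \<and> J \<subset> {1..n} \<longrightarrow> S \<noteq> (\<Inter>j\<in>J. Si j))"
    using assms unfolding is_factorization_def .
  then show "\<forall>i\<in>{1..n}. irreducible_ns (Si i)" by (elim conjE)
  from d show "S = (\<Inter>i\<in>{1..n}. Si i)" by (elim conjE)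
  fix J :: "nat set" assume "J \<noteq> {}" "J \<subset> {1..n}"
  with d show "S \<noteq> (\<Inter>j\<in>J. Si j)" by (elim conjE) (erule allE[of _ J], simp)
qed

lemma not_irr2:
  assumes irr: "irreducible_ns S" and R: "is_factorization S 2 R"
  shows False
proof -
  have e: "{1..2::nat} = {1,2}" by auto
  have p1: "{1::nat} \<subset> {1..2}"
  proof (rule psubsetI)
    show "{1::nat} \<subseteq> {1..2}" by simp
    have "(2::nat) \<in> {1..2}" "(2::nat) \<notin> {1}" by simp_all
    then show "{1::nat} \<noteq> {1..2}" by metis
  qed
  have p2: "{2::nat} \<subset> {1..2}"
  proof (rule psubsetI)
    show "{2::nat} \<subseteq> {1..2}" by simp
    have "(1::nat) \<in> {1..2}" "(1::nat) \<notin> {2}" by simp_all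
    then show "{2::nat} \<noteq> {1..2}" by metis
  qed
  have r1: "irreducible_ns (R 1)" "irreducible_ns (R 2)" using fact_parts(1)[OF R] unfolding e by simp_all
  have eq: "S = R 1 \<inter> R 2" using fact_parts(2)[OF R] unfolding e by simp
  have ne1: "S \<noteq> R 1"
  proof -
    have "S \<noteq> (\<Inter>j\<in>{1}. R j)" by (rule fact_parts(3)[OF R _ p1]) simp
    then show ?thesis by simp
  qed
  have ne2: "S \<noteq> R 2"
  proof -
    have "S \<noteq> (\<Inter>j\<in>{2}. R j)" by (rule fact_parts(3)[OF R _ p2]) simp
    then show ?thesis by simp
  qed
  have n1: "numerical_semigroup (R 1)" and n2: "numerical_semigroup (R 2)"
    using r1 unfolding irreducible_ns_def by simp_all
  have s1: "S \<subset> R 1" using ne1 eq by (simp add: psubset_eq)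
  have s2: "S \<subset> R 2" using ne2 eq by (simp add: psubset_eq)
  have "\<exists>T U. numerical_semigroup T \<and> numerical_semigroup U \<and> S \<subset> T \<and> S \<subset> U \<and> S = T \<inter> U"
    by (rule exI[of _ "R 1"], rule exI[of _ "R 2"]) (intro conjI n1 n2 s1 s2 eq)
  then show False using irr unfolding irreducible_ns_def by simp
qed

theorem mainTheorem7:
  shows "U_m 2 = {l::nat. l \<ge> 2}"
proof (intro set_eqI iffI)
  fix l assume "l \<in> U_m 2"
  then obtain S where l: "l > 0" and f2: "has_factorization_of_length S 2"
    and fl: "has_factorization_of_length S l" unfolding U_m_def by blast
  show "l \<in> {l. l \<ge> 2}"
  proof (rule ccontr)
    assume "l \<notin> {l. l \<ge> 2}"
    with l have l1: "l = 1" by simp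
    from fl l1 obtain Si where F: "is_factorization S 1 Si" unfolding has_factorization_of_length_def by blast
    have "irreducible_ns (Si 1)" using fact_parts(1)[OF F] by simp
    moreover have "S = Si 1" using fact_parts(2)[OF F] by simp
    ultimately have irr: "irreducible_ns S" by simp
    from f2 obtain R where R: "is_factorization S 2 R" unfolding has_factorization_of_length_def by blast
    show False using not_irr2[OF irr R] .
  qed
next
  fix l :: nat assume "l \<in> {l. l \<ge> 2}"
  then have l: "l \<ge> 2" by simp
  define t where "t = l - 1"
  have t: "t > 0" "l = t + 1" using l unfolding t_def by auto
  have ns: "numerical_semigroup (AA t \<inter> TT (4*t))" using ns_Int[OF ns_AA ns_TT] .
  have h2: "has_factorization_of_length (AA t \<inter> TT (4*t)) 2"
    unfolding has_factorization_of_length_def using len2[OF t(1)] by blast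
  have hl: "has_factorization_of_length (AA t \<inter> TT (4*t)) l"
    unfolding has_factorization_of_length_def using lenl[OF t(1)] t(2) by blast
  show "l \<in> U_m 2" unfolding U_m_def using ns h2 hl l by auto
qed

end
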